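(* Let $P\in\Delta_{\mathcal{T},\mathcal{X},\mathcal{Y}}$. If the set of minimizers of $Q\mapsto I_Q(T:X\mid Y)$ over $\Delta_P$ contains more than one element, then there exists a minimizer lying on the relative boundary of $\Delta_P$.
   Context: $T,X,Y$ are random variables with finite state spaces $\mathcal{T},\mathcal{X},\mathcal{Y}$; $\Delta_{\mathcal{T},\mathcal{X},\mathcal{Y}}$ is the set of all joint distributions on $\mathcal{T}\times\mathcal{X}\times\mathcal{Y}$. For $P\in\Delta_{\mathcal{T},\mathcal{X},\mathcal{Y}}$, $\Delta_P=\{Q\in\Delta_{\mathcal{T},\mathcal{X},\mathcal{Y}}: Q(X=x,T=t)=P(X=x,T=t),\ Q(Y=y,T=t)=P(Y=y,T=t)\ \forall x,y,t\}$, a polytope. $I_Q(T:X\mid Y)$ is the conditional mutual information computed under $Q$. On $\Delta_P$, minimizing $I_Q(T:X\mid Y)$ is equivalent to maximizing the conditional entropy $H_Q(T\mid X,Y)$. *)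

theory Defs
  imports "HOL-Analysis.Analysis"
begin

text \<open>Joint distributions of (T,X,Y) on finite state spaces 't, 'x, 'y, represented as
  vectors in the Euclidean space real ^ ('t \<times> 'x \<times> 'y), so that affine notions
  (relative interior / relative boundary) are available from HOL-Analysis.\<close>

definition joint_dists :: "(real ^ ('t::finite \<times> 'x::finite \<times> 'y::finite)) set" where
  "joint_dists = {Q. (\<forall>i. 0 \<le> Q $ i) \<and> (\<Sum>i\<in>UNIV. Q $ i) = 1}"

definition marg_TX :: "real ^ ('t::finite \<times> 'x::finite \<times> 'y::finite) \<Rightarrow> 't \<Rightarrow> 'x \<Rightarrow> real" where
  "marg_TX Q t x = (\<Sum>y\<in>UNIV. Q $ (t, x, y))"

definition marg_TY :: "real ^ ('t::finite \<times> 'x::finite \<times> 'y::finite) \<Rightarrow> 't \<Rightarrow> 'y \<Rightarrow> real" where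
  "marg_TY Q t y = (\<Sum>x\<in>UNIV. Q $ (t, x, y))"

definition marg_XY :: "real ^ ('t::finite \<times> 'x::finite \<times> 'y::finite) \<Rightarrow> 'x \<Rightarrow> 'y \<Rightarrow> real" where
  "marg_XY Q x y = (\<Sum>t\<in>UNIV. Q $ (t, x, y))"

definition marg_Y :: "real ^ ('t::finite \<times> 'x::finite \<times> 'y::finite) \<Rightarrow> 'y \<Rightarrow> real" where
  "marg_Y Q y = (\<Sum>t\<in>UNIV. \<Sum>x\<in>UNIV. Q $ (t, x, y))"

definition Delta_P :: "real ^ ('t::finite \<times> 'x::finite \<times> 'y::finite) \<Rightarrow> (real ^ ('t \<times> 'x \<times> 'y)) set" where
  "Delta_P P = {Q \<in> joint_dists. (\<forall>t x. marg_TX Q t x = marg_TX P t x) \<and>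
                                  (\<forall>t y. marg_TY Q t y = marg_TY P t y)}"

definition cond_mutual_info :: "real ^ ('t::finite \<times> 'x::finite \<times> 'y::finite) \<Rightarrow> real" where
  "cond_mutual_info Q = (\<Sum>(t, x, y)\<in>UNIV.
     if 0 < Q $ (t, x, y)
     then Q $ (t, x, y) * ln ((Q $ (t, x, y) * marg_Y Q y) / (marg_XY Q x y * marg_TY Q t y))
     else 0)"

definition CMI_minimizers :: "real ^ ('t::finite \<times> 'x::finite \<times> 'y::finite) \<Rightarrow> (real ^ ('t \<times> 'x \<times> 'y)) set" where
  "CMI_minimizers P = {Q \<in> Delta_P P. \<forall>Q'\<in>Delta_P P. cond_mutual_info Q \<le> cond_mutual_info Q'}"

end

theory Submission
  imports Defs
begin


definition psi :: "('t::finite \<Rightarrow> real) \<Rightarrow> real" where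
  "psi v = (\<Sum>t\<in>UNIV. v t * ln (v t / sum v UNIV))"

lemma psi_hom: "psi (\<lambda>t. c * m t) = c * psi m"
proof (cases "c = 0")
  case True then show ?thesis by (simp add: psi_def)
next
  case False
  have e: "sum (\<lambda>t. c * m t) UNIV = c * sum m UNIV" by (simp add: sum_distrib_left)
  have "psi (\<lambda>t. c * m t) = (\<Sum>t\<in>UNIV. c * (m t * ln (m t / sum m UNIV)))"
    unfolding psi_def e using False by (intro sum.cong) auto
  then show ?thesis by (simp add: psi_def sum_distrib_left)
qed

lemma ln_strict: assumes "(0::real) < z" shows "1 - 1/z \<le> ln z" and "ln z = 1 - 1/z \<Longrightarrow> z = 1"
proof -
  have "ln (1/z) \<le> 1/z - 1" using assms by (intro ln_le_minus_one) simp
  then show "1 - 1/z \<le> ln z" using assms by (simp add: ln_div)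
next
  assume "ln z = 1 - 1/z"
  then have "ln (1/z) = 1/z - 1" using assms by (simp add: ln_div)
  then have "1/z = 1" using assms by (intro ln_eq_minus_one) auto
  then show "z = 1" by simp
qed

lemma gibbs:
  fixes u m :: "'t::finite \<Rightarrow> real"
  assumes u0: "\<And>t. 0 \<le> u t" and m0: "\<And>t. 0 \<le> m t" and sup: "\<And>t. m t = 0 \<Longrightarrow> u t = 0"
  shows "(\<Sum>t\<in>UNIV. u t * ln (m t / sum m UNIV)) \<le> psi u"
    and "psi u = (\<Sum>t\<in>UNIV. u t * ln (m t / sum m UNIV)) \<Longrightarrow> (\<forall>t. u t * sum m UNIV = m t * sum u UNIV)"
proof -
  define U where "U = sum u UNIV"
  define M where "M = sum m UNIV"
  define d where "d t = u t * ln (u t / U) - u t * ln (m t / M) - (u t - m t * U / M)" for t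
  have main: "(\<forall>t. 0 \<le> d t) \<and> sum (\<lambda>t. u t - m t * U / M) UNIV = 0 \<and>
     (\<forall>t. d t = 0 \<longrightarrow> u t * M = m t * U)"
  proof (cases "U = 0")
    case True
    then have "u t = 0" for t using u0 sum_nonneg_eq_0_iff[of UNIV u] by (simp add: U_def)
    then show ?thesis using True by (simp add: d_def)
  next
    case False
    have U0: "U > 0" using False u0 by (simp add: U_def sum_nonneg less_le)
    obtain t0 where "u t0 \<noteq> 0" using False by (metis U_def sum.neutral)
    then have "m t0 > 0" using sup m0 less_le by metis
    then have M0: "M > 0" unfolding M_def
      by (metis m0 member_le_sum finite UNIV_I order_less_le_trans)
    have "sum (\<lambda>t. u t - m t * U / M) UNIV = U - M * U / M"
      by (simp add: sum_subtractf U_def M_def sum_divide_distrib[symmetric] sum_distrib_right[symmetric])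
    also have "\<dots> = 0" using M0 by simp
    finally have s: "sum (\<lambda>t. u t - m t * U / M) UNIV = 0" .
    have pt: "0 \<le> d t \<and> (d t = 0 \<longrightarrow> u t * M = m t * U)" for t
    proof (cases "u t = 0")
      case True
      then show ?thesis using m0[of t] U0 M0 by (simp add: d_def)
    next
      case ne: False
      have ut: "u t > 0" using ne u0 less_le by metis
      have mt: "m t > 0" using sup m0 less_le ne by metis
      define z where "z = u t * M / (m t * U)"
      have z0: "z > 0" using ut mt U0 M0 by (simp add: z_def)
      have lsplit: "ln (u t / U) - ln (m t / M) = ln z"
        using ut mt U0 M0 by (simp add: z_def ln_div ln_mult)
      have iz: "u t * (1/z) = m t * U / M" using ut mt U0 M0 by (simp add: z_def field_simps)
      have dz: "d t = u t * (ln z - (1 - 1/z))"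
        unfolding d_def using lsplit iz by (simp add: algebra_simps)
      have "0 \<le> d t" using dz ln_strict(1)[OF z0] ut by simp
      moreover have "d t = 0 \<longrightarrow> u t * M = m t * U"
      proof
        assume "d t = 0"
        then have "ln z = 1 - 1/z" using dz ut by simp
        then have "z = 1" using ln_strict(2)[OF z0] by simp
        then show "u t * M = m t * U" using mt U0 by (simp add: z_def field_simps)
      qed
      ultimately show ?thesis by simp
    qed
    show ?thesis using s pt by blast
  qed
  have dsum: "sum d UNIV = psi u - (\<Sum>t\<in>UNIV. u t * ln (m t / M))"
    using main by (simp add: d_def sum_subtractf psi_def U_def)
  show "(\<Sum>t\<in>UNIV. u t * ln (m t / sum m UNIV)) \<le> psi u"
    using dsum main sum_nonneg[of UNIV d] by (simp add: M_def)
  assume "psi u = (\<Sum>t\<in>UNIV. u t * ln (m t / sum m UNIV))"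
  then have "sum d UNIV = 0" using dsum by (simp add: M_def)
  then have "\<forall>t. d t = 0" using main sum_nonneg_eq_0_iff[of UNIV d] by simp
  then show "\<forall>t. u t * sum m UNIV = m t * sum u UNIV" using main by (simp add: M_def U_def)
qed



lemma mid:
  fixes u w :: "'t::finite \<Rightarrow> real"
  assumes u0: "\<And>t. 0 \<le> u t" and w0: "\<And>t. 0 \<le> w t"
  defines "m \<equiv> (\<lambda>t. (u t + w t) / 2)"
  shows "2 * psi m \<le> psi u + psi w"
    and "2 * psi m = psi u + psi w \<Longrightarrow> (\<forall>t. u t * sum m UNIV = m t * sum u UNIV) \<and> (\<forall>t. w t * sum m UNIV = m t * sum w UNIV)"
proof -
  have m0: "\<And>t. 0 \<le> m t" using u0 w0 by (simp add: m_def)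
  have su: "u t = 0" if "m t = 0" for t using u0[of t] w0[of t] that unfolding m_def by simp
  have sw: "w t = 0" if "m t = 0" for t using u0[of t] w0[of t] that unfolding m_def by simp
  have e: "(\<Sum>t\<in>UNIV. u t * ln (m t / sum m UNIV)) + (\<Sum>t\<in>UNIV. w t * ln (m t / sum m UNIV)) = 2 * psi m"
    unfolding psi_def sum.distrib[symmetric] sum_distrib_left
    by (intro sum.cong) (auto simp: m_def algebra_simps)
  note gu = gibbs[of u m, OF u0 m0 su] and gw = gibbs[of w m, OF w0 m0 sw]
  show "2 * psi m \<le> psi u + psi w" using gu(1) gw(1) e by linarith
  assume "2 * psi m = psi u + psi w"
  then have "psi u = (\<Sum>t\<in>UNIV. u t * ln (m t / sum m UNIV))" "psi w = (\<Sum>t\<in>UNIV. w t * ln (m t / sum m UNIV))"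
    using gu(1) gw(1) e by linarith+
  then show "(\<forall>t. u t * sum m UNIV = m t * sum u UNIV) \<and> (\<forall>t. w t * sum m UNIV = m t * sum w UNIV)"
    using gu(2) gw(2) by blast
qed

lemma line:
  fixes u w m :: "'t::finite \<Rightarrow> real"
  assumes u0: "\<And>t. 0 \<le> u t" and w0: "\<And>t. 0 \<le> w t"
    and mdef: "m = (\<lambda>t. (u t + w t) / 2)"
    and pu: "\<forall>t. u t * sum m UNIV = m t * sum u UNIV"
    and pw: "\<forall>t. w t * sum m UNIV = m t * sum w UNIV"
  shows "psi (\<lambda>t. u t + s * (w t - u t)) = (1 - s) * psi u + s * psi w"
proof (cases "sum m UNIV = 0")
  case True
  have mz: "m t = 0" for t using True sum_nonneg_eq_0_iff[of UNIV m] u0 w0 by (simp add: mdef add_nonneg_nonneg)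
  have "u t = 0 \<and> w t = 0" for t using mz[of t] u0[of t] w0[of t] by (simp add: mdef)
  then have "u = (\<lambda>t. 0 * m t)" "w = (\<lambda>t. 0 * m t)" "(\<lambda>t. u t + s * (w t - u t)) = (\<lambda>t. 0 * m t)" by auto
  then show ?thesis by (simp only: psi_hom)
next
  case False
  define M where "M = sum m UNIV"
  have "u = (\<lambda>t. (sum u UNIV / M) * m t)" using pu False by (auto simp: M_def field_simps)
  moreover have "w = (\<lambda>t. (sum w UNIV / M) * m t)" using pw False by (auto simp: M_def field_simps)
  ultimately have uu: "u = (\<lambda>t. (sum u UNIV / M) * m t)" and ww: "w = (\<lambda>t. (sum w UNIV / M) * m t)" by blast+
  have pu': "psi u = (sum u UNIV / M) * psi m" by (subst uu) (rule psi_hom)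
  have pw': "psi w = (sum w UNIV / M) * psi m" by (subst ww) (rule psi_hom)
  have "(\<lambda>t. u t + s * (w t - u t)) = (\<lambda>t. ((1 - s) * (sum u UNIV / M) + s * (sum w UNIV / M)) * m t)"
  proof
    fix t
    have "u t = (sum u UNIV / M) * m t" "w t = (sum w UNIV / M) * m t" using uu ww by metis+
    then show "u t + s * (w t - u t) = ((1 - s) * (sum u UNIV / M) + s * (sum w UNIV / M)) * m t"
      by (simp only:) (simp add: algebra_simps diff_divide_distrib[symmetric] add_divide_distrib[symmetric])
  qed
  then have "psi (\<lambda>t. u t + s * (w t - u t)) = ((1 - s) * (sum u UNIV / M) + s * (sum w UNIV / M)) * psi m"
    by (simp only: psi_hom)
  then show ?thesis unfolding pu' pw' by (simp add: algebra_simps)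
qed



definition blk :: "real ^ ('t::finite \<times> 'x::finite \<times> 'y::finite) \<Rightarrow> 'x \<Rightarrow> 'y \<Rightarrow> 't \<Rightarrow> real" where
  "blk Q x y = (\<lambda>t. Q $ (t, x, y))"

definition FF :: "real ^ ('t::finite \<times> 'x::finite \<times> 'y::finite) \<Rightarrow> real" where
  "FF Q = (\<Sum>x\<in>UNIV. \<Sum>y\<in>UNIV. psi (blk Q x y))"

definition GG :: "real ^ ('t::finite \<times> 'x::finite \<times> 'y::finite) \<Rightarrow> real" where
  "GG Q = (\<Sum>t\<in>UNIV. \<Sum>y\<in>UNIV. marg_TY Q t y * ln (marg_Y Q y / marg_TY Q t y))"

lemma sum_triple: "(\<Sum>(t, x, y)\<in>(UNIV::('t::finite \<times> 'x::finite \<times> 'y::finite) set). g t x y) = (\<Sum>t\<in>UNIV. \<Sum>x\<in>UNIV. \<Sum>y\<in>UNIV. g t x y)"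
  by (simp add: sum.cartesian_product[symmetric] UNIV_Times_UNIV[symmetric] del: UNIV_Times_UNIV)

lemma decomp:
  fixes Q :: "real ^ ('t::finite \<times> 'x::finite \<times> 'y::finite)"
  assumes q0: "\<And>i. 0 \<le> Q $ i"
  shows "cond_mutual_info Q = FF Q + GG Q"
proof -
  have tm: "(if 0 < Q $ (t, x, y)
     then Q $ (t, x, y) * ln ((Q $ (t, x, y) * marg_Y Q y) / (marg_XY Q x y * marg_TY Q t y))
     else 0) = Q $ (t, x, y) * ln (Q $ (t, x, y) / marg_XY Q x y) + Q $ (t, x, y) * ln (marg_Y Q y / marg_TY Q t y)"
    for t x y
  proof (cases "0 < Q $ (t, x, y)")
    case False
    then have "Q $ (t, x, y) = 0" using q0[of "(t,x,y)"] by linarith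
    then show ?thesis by simp
  next
    case True
    have a: "Q $ (t, x, y) \<le> marg_XY Q x y" unfolding marg_XY_def
      using member_le_sum[of t UNIV "\<lambda>t. Q $ (t, x, y)"] q0 by auto
    have b: "Q $ (t, x, y) \<le> marg_TY Q t y" unfolding marg_TY_def
      using member_le_sum[of x UNIV "\<lambda>x. Q $ (t, x, y)"] q0 by auto
    have "0 \<le> marg_TY Q t' y" for t' unfolding marg_TY_def using q0 by (simp add: sum_nonneg)
    then have c: "marg_TY Q t y \<le> marg_Y Q y" unfolding marg_Y_def
      using member_le_sum[of t UNIV "\<lambda>t. marg_TY Q t y"] by (auto simp: marg_TY_def)
    have pa: "0 < marg_XY Q x y" and pb: "0 < marg_TY Q t y" and pc: "0 < marg_Y Q y"
      using a b c True by linarith+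
    have "ln ((Q $ (t, x, y) * marg_Y Q y) / (marg_XY Q x y * marg_TY Q t y))
       = ln (Q $ (t, x, y) / marg_XY Q x y) + ln (marg_Y Q y / marg_TY Q t y)"
      using True pa pb pc by (simp add: ln_div ln_mult)
    then show ?thesis using True by (simp add: distrib_left)
  qed
  have "cond_mutual_info Q = (\<Sum>t\<in>UNIV. \<Sum>x\<in>UNIV. \<Sum>y\<in>UNIV.
      Q $ (t, x, y) * ln (Q $ (t, x, y) / marg_XY Q x y) + Q $ (t, x, y) * ln (marg_Y Q y / marg_TY Q t y))"
    unfolding cond_mutual_info_def sum_triple tm ..
  also have "\<dots> = (\<Sum>t\<in>UNIV. \<Sum>x\<in>UNIV. \<Sum>y\<in>UNIV. Q $ (t, x, y) * ln (Q $ (t, x, y) / marg_XY Q x y))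
     + (\<Sum>t\<in>UNIV. \<Sum>x\<in>UNIV. \<Sum>y\<in>UNIV. Q $ (t, x, y) * ln (marg_Y Q y / marg_TY Q t y))"
    by (simp add: sum.distrib)
  also have "(\<Sum>t\<in>UNIV. \<Sum>x\<in>UNIV. \<Sum>y\<in>UNIV. Q $ (t, x, y) * ln (Q $ (t, x, y) / marg_XY Q x y)) = FF Q"
  proof -
    have "(\<Sum>t\<in>UNIV. \<Sum>x\<in>UNIV. \<Sum>y\<in>UNIV. Q $ (t, x, y) * ln (Q $ (t, x, y) / marg_XY Q x y))
      = (\<Sum>x\<in>UNIV. \<Sum>t\<in>UNIV. \<Sum>y\<in>UNIV. Q $ (t, x, y) * ln (Q $ (t, x, y) / marg_XY Q x y))"
      by (rule sum.swap)
    also have "\<dots> = (\<Sum>x\<in>UNIV. \<Sum>y\<in>UNIV. \<Sum>t\<in>UNIV. Q $ (t, x, y) * ln (Q $ (t, x, y) / marg_XY Q x y))"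
      by (rule sum.cong[OF refl], rule sum.swap)
    also have "\<dots> = FF Q" unfolding FF_def psi_def blk_def marg_XY_def ..
    finally show ?thesis .
  qed
  also have "(\<Sum>t\<in>UNIV. \<Sum>x\<in>UNIV. \<Sum>y\<in>UNIV. Q $ (t, x, y) * ln (marg_Y Q y / marg_TY Q t y)) = GG Q"
  proof -
    have "(\<Sum>t\<in>UNIV. \<Sum>x\<in>UNIV. \<Sum>y\<in>UNIV. Q $ (t, x, y) * ln (marg_Y Q y / marg_TY Q t y))
      = (\<Sum>t\<in>UNIV. \<Sum>y\<in>UNIV. \<Sum>x\<in>UNIV. Q $ (t, x, y) * ln (marg_Y Q y / marg_TY Q t y))"
      by (rule sum.cong[OF refl], rule sum.swap)
    also have "\<dots> = GG Q" unfolding GG_def marg_TY_def[of Q] sum_distrib_right ..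
    finally show ?thesis .
  qed
  finally show ?thesis .
qed

lemma GG_eq:
  assumes "\<And>t y. marg_TY Q t y = marg_TY P t y"
  shows "GG Q = GG P"
proof -
  have "marg_Y Q y = marg_Y P y" for y
    using assms by (simp add: marg_Y_def marg_TY_def[symmetric])
  then show ?thesis unfolding GG_def using assms by simp
qed



lemma L_in:
  fixes Q1 Q2 P :: "real ^ ('t::finite \<times> 'x::finite \<times> 'y::finite)"
  assumes "Q1 \<in> Delta_P P" "Q2 \<in> Delta_P P" "\<And>i. 0 \<le> (Q1 + s *\<^sub>R (Q2 - Q1)) $ i"
  shows "Q1 + s *\<^sub>R (Q2 - Q1) \<in> Delta_P P"
  using assms unfolding Delta_P_def joint_dists_def marg_TX_def marg_TY_def
  by (simp add: sum.distrib sum_distrib_left[symmetric] sum_subtractf)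

lemma FF_line:
  fixes Q1 Q2 :: "real ^ ('t::finite \<times> 'x::finite \<times> 'y::finite)"
  assumes q1: "\<And>i. 0 \<le> Q1 $ i" and q2: "\<And>i. 0 \<le> Q2 $ i"
    and pr: "\<And>x y. (\<forall>t. blk Q1 x y t * sum (\<lambda>t. (blk Q1 x y t + blk Q2 x y t) / 2) UNIV
                 = (blk Q1 x y t + blk Q2 x y t) / 2 * sum (blk Q1 x y) UNIV) \<and>
                (\<forall>t. blk Q2 x y t * sum (\<lambda>t. (blk Q1 x y t + blk Q2 x y t) / 2) UNIV
                 = (blk Q1 x y t + blk Q2 x y t) / 2 * sum (blk Q2 x y) UNIV)"
  shows "FF (Q1 + s *\<^sub>R (Q2 - Q1)) = (1 - s) * FF Q1 + s * FF Q2"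
proof -
  have "psi (blk (Q1 + s *\<^sub>R (Q2 - Q1)) x y) = (1 - s) * psi (blk Q1 x y) + s * psi (blk Q2 x y)" for x y
  proof -
    have e: "blk (Q1 + s *\<^sub>R (Q2 - Q1)) x y = (\<lambda>t. blk Q1 x y t + s * (blk Q2 x y t - blk Q1 x y t))"
      by (simp add: blk_def)
    show ?thesis unfolding e
      by (rule line[OF _ _ refl]) (use q1 q2 pr in \<open>auto simp: blk_def\<close>)
  qed
  then show ?thesis unfolding FF_def by (simp add: sum.distrib sum_distrib_left)
qed



theorem mainTheorem4:
  fixes P :: "real ^ ('t::finite \<times> 'x::finite \<times> 'y::finite)"
  assumes "P \<in> joint_dists"
    and "\<exists>Q1 Q2. Q1 \<in> CMI_minimizers P \<and> Q2 \<in> CMI_minimizers P \<and> Q1 \<noteq> Q2"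
  shows "\<exists>Q \<in> CMI_minimizers P. Q \<in> rel_frontier (Delta_P P)"
proof -
  obtain Q1 Q2 where m1: "Q1 \<in> CMI_minimizers P" and m2: "Q2 \<in> CMI_minimizers P" and ne: "Q1 \<noteq> Q2"
    using assms(2) by blast
  have d1: "Q1 \<in> Delta_P P" and d2: "Q2 \<in> Delta_P P" using m1 m2 by (auto simp: CMI_minimizers_def)
  have c12: "cond_mutual_info Q1 = cond_mutual_info Q2" using m1 m2 d1 d2
    by (auto simp: CMI_minimizers_def intro: order.antisym)
  have q1: "\<And>i. 0 \<le> Q1 $ i" and q2: "\<And>i. 0 \<le> Q2 $ i" using d1 d2 by (auto simp: Delta_P_def joint_dists_def)
  define L where "L s = Q1 + s *\<^sub>R (Q2 - Q1)" for s
  have Lc: "L s $ i = Q1 $ i + s * (Q2 $ i - Q1 $ i)" for s i by (simp add: L_def)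
  have Lin: "L s \<in> Delta_P P" if "\<And>i. 0 \<le> L s $ i" for s
    using L_in[OF d1 d2] that by (simp add: L_def)
  have GGd: "GG Q = GG P" if "Q \<in> Delta_P P" for Q
    using that by (intro GG_eq) (auto simp: Delta_P_def)
  have cm_dec: "cond_mutual_info Q = FF Q + GG P" if "Q \<in> Delta_P P" for Q
    using decomp[of Q] GGd[OF that] that by (auto simp: Delta_P_def joint_dists_def)
  have mnn: "0 \<le> L (1/2) $ i" for i using q1[of i] q2[of i] by (simp add: Lc algebra_simps)
  have dm: "L (1/2) \<in> Delta_P P" using Lin mnn by blast
  have "cond_mutual_info Q1 \<le> cond_mutual_info (L (1/2))" using m1 dm by (auto simp: CMI_minimizers_def)
  then have F1m: "FF Q1 \<le> FF (L (1/2))" and F12: "FF Q1 = FF Q2"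
    using cm_dec[OF d1] cm_dec[OF d2] cm_dec[OF dm] c12 by linarith+
  define u where "u x y = blk Q1 x y" for x y
  define w where "w x y = blk Q2 x y" for x y
  define mm where "mm x y = (\<lambda>t. (u x y t + w x y t) / 2)" for x y
  have bm: "blk (L (1/2)) x y = mm x y" for x y
    by (auto simp: blk_def mm_def u_def w_def Lc algebra_simps)
  have u0: "0 \<le> u x y t" and w0: "0 \<le> w x y t" for x y t using q1 q2 by (auto simp: u_def w_def blk_def)
  define e where "e x y = psi (u x y) + psi (w x y) - 2 * psi (mm x y)" for x y
  have e0: "0 \<le> e x y" for x y using mid(1)[of "u x y" "w x y"] u0 w0 by (simp add: e_def mm_def)
  have "(\<Sum>x\<in>UNIV. \<Sum>y\<in>UNIV. e x y) = FF Q1 + FF Q2 - 2 * FF (L (1/2))"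
    unfolding e_def FF_def bm u_def w_def
    by (simp add: sum.distrib sum_subtractf sum_distrib_left)
  also have "\<dots> \<le> 0" using F1m F12 by linarith
  finally have "(\<Sum>x\<in>UNIV. \<Sum>y\<in>UNIV. e x y) \<le> 0" .
  then have "(\<Sum>x\<in>UNIV. \<Sum>y\<in>UNIV. e x y) = 0"
    using e0 by (simp add: sum_nonneg order.antisym)
  then have "\<forall>x\<in>UNIV. (\<Sum>y\<in>UNIV. e x y) = 0"
    by (subst sum_nonneg_eq_0_iff[symmetric]) (auto intro: sum_nonneg e0)
  then have ez: "e x y = 0" for x y using sum_nonneg_eq_0_iff[of UNIV "e x"] e0 by auto
  have pr: "(\<forall>t. u x y t * sum (mm x y) UNIV = mm x y t * sum (u x y) UNIV) \<and>
            (\<forall>t. w x y t * sum (mm x y) UNIV = mm x y t * sum (w x y) UNIV)" for x y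
    using mid(2)[of "u x y" "w x y"] u0 w0 ez[of x y] by (simp add: e_def mm_def)
  have Fl: "FF (L s) = FF Q1" for s
    using FF_line[OF q1 q2, of s] pr F12 unfolding L_def u_def w_def mm_def
    by (simp add: algebra_simps)
  have minL: "L s \<in> CMI_minimizers P" if "\<And>i. 0 \<le> L s $ i" for s
  proof -
    have "L s \<in> Delta_P P" using Lin that by blast
    moreover have "cond_mutual_info (L s) = cond_mutual_info Q1"
      using cm_dec[OF calculation] cm_dec[OF d1] Fl by simp
    ultimately show ?thesis using m1 by (simp add: CMI_minimizers_def)
  qed
  define D where "D = Q2 - Q1"
  have Dc: "D $ i = Q2 $ i - Q1 $ i" for i by (simp add: D_def)
  have DL: "L s $ i = Q1 $ i + s * D $ i" for s i by (simp add: Lc Dc)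
  have sumD: "sum (\<lambda>i. D $ i) UNIV = 0" using d1 d2
    by (simp add: Dc sum_subtractf Delta_P_def joint_dists_def)
  have Dne: "D \<noteq> 0" using ne by (simp add: D_def)
  have "\<exists>i. D $ i < 0"
  proof (rule ccontr)
    assume "\<not> ?thesis"
    then have "\<forall>i. 0 \<le> D $ i" by (simp add: not_less)
    then have "\<forall>i. D $ i = 0" using sumD sum_nonneg_eq_0_iff[of UNIV "\<lambda>i. D $ i"] by (metis finite UNIV_I)
    then have "D = 0" by (simp add: vec_eq_iff)
    then show False using Dne by simp
  qed
  define I where "I = {i. D $ i < 0}"
  have In: "I \<noteq> {}" using \<open>\<exists>i. D $ i < 0\<close> by (auto simp: I_def)
  define s0 where "s0 = Min ((\<lambda>i. - Q1 $ i / D $ i) ` I)"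
  have "s0 \<in> (\<lambda>i. - Q1 $ i / D $ i) ` I" unfolding s0_def using In by (intro Min_in) auto
  then obtain i0 where i0: "i0 \<in> I" "s0 = - Q1 $ i0 / D $ i0" by blast
  have s0le: "s0 \<le> - Q1 $ i / D $ i" if "i \<in> I" for i
    unfolding s0_def using that by (intro Min_le) auto
  have s00: "0 \<le> s0" using i0 q1[of i0] by (auto simp: I_def divide_nonneg_neg)
  have Ls0: "0 \<le> L s0 $ i" for i
  proof (cases "i \<in> I")
    case True
    then have "D $ i < 0" by (simp add: I_def)
    then have "(- Q1 $ i / D $ i) * D $ i \<le> s0 * D $ i"
      by (intro mult_right_mono_neg[OF s0le[OF True]]) simp
    then show ?thesis using \<open>D $ i < 0\<close> by (simp add: DL)
  next
    case False
    then show ?thesis using q1[of i] s00 by (simp add: DL I_def not_less)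
  qed
  have Li0: "L s0 $ i0 = 0" using i0 by (simp add: DL I_def)
  have "L s0 \<notin> rel_interior (Delta_P P)"
  proof
    assume "L s0 \<in> rel_interior (Delta_P P)"
    then obtain e where e: "e > 0" "cball (L s0) e \<inter> affine hull (Delta_P P) \<subseteq> Delta_P P"
      by (auto simp: mem_rel_interior_cball)
    define s1 where "s1 = s0 + e / norm D"
    have nD: "norm D > 0" using Dne by simp
    have "L s1 - L s0 = (e / norm D) *\<^sub>R D" by (simp add: L_def s1_def D_def algebra_simps)
    then have "norm (L s1 - L s0) = e" using nD e(1) by simp
    then have "dist (L s0) (L s1) = e" by (simp add: dist_norm norm_minus_commute)
    then have inc: "L s1 \<in> cball (L s0) e" by simp
    have "L s1 = (1 - s1) *\<^sub>R Q1 + s1 *\<^sub>R Q2" by (simp add: L_def algebra_simps)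
    moreover have "Q1 \<in> affine hull (Delta_P P)" "Q2 \<in> affine hull (Delta_P P)"
      using d1 d2 by (auto intro: hull_inc)
    ultimately have "L s1 \<in> affine hull (Delta_P P)"
      using affine_affine_hull[of "Delta_P P"] unfolding affine_def by simp
    then have "L s1 \<in> Delta_P P" using inc e(2) by blast
    then have "0 \<le> L s1 $ i0" unfolding Delta_P_def joint_dists_def by blast
    moreover have "L s1 $ i0 = (e / norm D) * D $ i0" using Li0 by (simp add: DL s1_def algebra_simps)
    moreover have "(e / norm D) * D $ i0 < 0" using i0(1) e(1) nD by (intro mult_pos_neg) (auto simp: I_def)
    ultimately show False by simp
  qed
  moreover have "L s0 \<in> closure (Delta_P P)" using Lin[OF Ls0] closure_subset by blast
  ultimately have "L s0 \<in> rel_frontier (Delta_P P)" by (simp add: rel_frontier_def)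
  then show ?thesis using minL[OF Ls0] by blast
qed


end
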